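(* Let $m$ be a prime power and let $l,s,t$ be positive integers such that $m\geq l-1$ and $2t-1\leq l$. Define $q=(s-1)m+1$. If there exists an $OA(t,l,s)$, then there exists a $q$-ary $c$-frameproof code of length $l$ and cardinality $\frac{s^t-1}{(s-1)^t}(q-1)^t$, for every integer $c\geq t$ such that $l=c(t-1)+r$ for some $r\in\{t,t+1,\ldots,c\}$.
   Context: An $OA(t,l,s)$ (orthogonal array of strength $t$, with $l$ constraints, $s\geq 2$ levels and index $1$) is an $l\times s^t$ array with entries from a set of $s$ symbols such that in every $t\times s^t$ subarray (choice of $t$ rows), every $t\times 1$ column vector over the symbol set appears exactly once. For $P\subseteq F^l$ over a finite alphabet $F$, $desc(P)=\{x\in F^l: \text{for every } i \text{ there is } y\in P \text{ with } x_i=y_i\}$. For an integer $c\geq 2$, a $c$-frameproof code of length $l$ is a subset $C\subseteq F^l$ with $desc(P)\cap C=P$ for every $P\subseteq C$ with $|P|\leq c$; it is $q$-ary if $|F|=q$. *)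

theory Defs
  imports Complex_Main "HOL-Computational_Algebra.Primes" "HOL-Library.FuncSet"
begin

definition prime_power :: "nat \<Rightarrow> bool" where
  "prime_power m \<longleftrightarrow> (\<exists>p k. prime p \<and> k \<ge> 1 \<and> m = p ^ k)"

definition is_OA :: "nat \<Rightarrow> nat \<Rightarrow> nat \<Rightarrow> 'a set \<Rightarrow> (nat \<Rightarrow> nat \<Rightarrow> 'a) \<Rightarrow> bool" where
  "is_OA t l s S A \<longleftrightarrow>
     s \<ge> 2 \<and> finite S \<and> card S = s \<and>
     (\<forall>i<l. \<forall>j<s ^ t. A i j \<in> S) \<and>
     (\<forall>T. T \<subseteq> {0..<l} \<and> card T = t \<longrightarrow>
        bij_betw (\<lambda>j. restrict (\<lambda>i. A i j) T) {0..<s ^ t} (PiE T (\<lambda>_. S)))"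

definition OA_exists :: "nat \<Rightarrow> nat \<Rightarrow> nat \<Rightarrow> bool" where
  "OA_exists t l s \<longleftrightarrow> (\<exists>(S :: nat set) A. is_OA t l s S A)"

definition words :: "nat \<Rightarrow> 'b set \<Rightarrow> (nat \<Rightarrow> 'b) set" where
  "words l F = PiE {0..<l} (\<lambda>_. F)"

definition desc :: "nat \<Rightarrow> 'b set \<Rightarrow> (nat \<Rightarrow> 'b) set \<Rightarrow> (nat \<Rightarrow> 'b) set" where
  "desc l F P = {x \<in> words l F. \<forall>i<l. \<exists>y\<in>P. x i = y i}"

definition frameproof :: "nat \<Rightarrow> nat \<Rightarrow> 'b set \<Rightarrow> (nat \<Rightarrow> 'b) set \<Rightarrow> bool" where
  "frameproof c l F C \<longleftrightarrow> C \<subseteq> words l F \<and>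
     (\<forall>P. P \<subseteq> C \<and> card P \<le> c \<longrightarrow> desc l F P \<inter> C = P)"

end

theory Submission
  imports Defs "HOL-Algebra.Algebraic_Closure" "HOL-Algebra.Multiplicative_Group"
    "HOL-Algebra.Polynomial_Divisibility" "HOL-Number_Theory.Residues"
begin


context cring begin

lemma binomial_ring:
  assumes a: "a \<in> carrier R" and b: "b \<in> carrier R"
  shows "(a \<oplus> b) [^] n = (\<Oplus>i\<in>{..n}. [(n choose i)] \<cdot> (a [^] i \<otimes> b [^] (n - i)))"
proof (induction n)
  case 0
  show ?case using a b by (simp add: finsum_0)
next
  case (Suc n)
  define T where "T = (\<lambda>n i. [(n choose i)] \<cdot> (a [^] i \<otimes> b [^] (n - i)))"
  define A where "A = (\<lambda>i. [(n choose i)] \<cdot> (a [^] Suc i \<otimes> b [^] (n - i)))"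
  define B where "B = (\<lambda>i. [(n choose Suc i)] \<cdot> (a [^] Suc i \<otimes> b [^] (n - i)))"
  define h where "h = (\<lambda>i. [(n choose i)] \<cdot> (a [^] i \<otimes> b [^] (Suc n - i)))"
  have Tc: "\<And>n i. T n i \<in> carrier R" unfolding T_def using a b by simp
  have Ac: "\<And>i. A i \<in> carrier R" unfolding A_def using a b by simp
  have Bc: "\<And>i. B i \<in> carrier R" unfolding B_def using a b by simp
  have hc: "\<And>i. h i \<in> carrier R" unfolding h_def using a b by simp
  have IH: "(a \<oplus> b) [^] n = (\<Oplus>i\<in>{..n}. T n i)" using Suc unfolding T_def by simp
  have "(a \<oplus> b) [^] Suc n = (a \<oplus> b) [^] n \<otimes> (a \<oplus> b)" by (simp add: nat_pow_Suc)
  also have "\<dots> = (\<Oplus>i\<in>{..n}. T n i) \<otimes> a \<oplus> (\<Oplus>i\<in>{..n}. T n i) \<otimes> b"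
    unfolding IH using a b Tc by (simp add: r_distr)
  also have "(\<Oplus>i\<in>{..n}. T n i) \<otimes> a = (\<Oplus>i\<in>{..n}. T n i \<otimes> a)"
    using a Tc by (simp add: finsum_ldistr)
  also have "\<dots> = (\<Oplus>i\<in>{..n}. A i)"
  proof (rule add.finprod_cong')
    fix i assume "i \<in> {..n}"
    have "T n i \<otimes> a = [(n choose i)] \<cdot> ((a [^] i \<otimes> b [^] (n - i)) \<otimes> a)"
      unfolding T_def using a b by (simp add: add_pow_ldistr)
    also have "(a [^] i \<otimes> b [^] (n - i)) \<otimes> a = a [^] Suc i \<otimes> b [^] (n - i)"
      using a b by (simp add: nat_pow_Suc m_ac)
    finally show "T n i \<otimes> a = A i" unfolding A_def .
  qed (use Ac in auto)
  also have "(\<Oplus>i\<in>{..n}. T n i) \<otimes> b = (\<Oplus>i\<in>{..n}. T n i \<otimes> b)"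
    using b Tc by (simp add: finsum_ldistr)
  also have "\<dots> = (\<Oplus>i\<in>{..n}. h i)"
  proof (rule add.finprod_cong')
    fix i assume i: "i \<in> {..n}"
    have "T n i \<otimes> b = [(n choose i)] \<cdot> ((a [^] i \<otimes> b [^] (n - i)) \<otimes> b)"
      unfolding T_def using a b by (simp add: add_pow_ldistr)
    also have "(a [^] i \<otimes> b [^] (n - i)) \<otimes> b = a [^] i \<otimes> b [^] (Suc n - i)"
      using a b i by (simp add: nat_pow_Suc m_ac Suc_diff_le)
    finally show "T n i \<otimes> b = h i" unfolding h_def .
  qed (use hc in auto)
  finally have L: "(a \<oplus> b) [^] Suc n = (\<Oplus>i\<in>{..n}. A i) \<oplus> (\<Oplus>i\<in>{..n}. h i)" .
  have "(\<Oplus>i\<in>{..Suc n}. h i) = h (Suc n) \<oplus> (\<Oplus>i\<in>{..n}. h i)"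
    using hc by (simp add: finsum_Suc)
  also have "h (Suc n) = \<zero>" unfolding h_def by (simp add: binomial_eq_0)
  finally have h1: "(\<Oplus>i\<in>{..Suc n}. h i) = (\<Oplus>i\<in>{..n}. h i)" using hc by simp
  have "(\<Oplus>i\<in>{..Suc n}. h i) = (\<Oplus>i\<in>{..n}. h (Suc i)) \<oplus> h 0"
    by (rule finsum_Suc2) (use hc in auto)
  also have "(\<Oplus>i\<in>{..n}. h (Suc i)) = (\<Oplus>i\<in>{..n}. B i)"
    unfolding h_def B_def by simp
  also have "h 0 = T (Suc n) 0" unfolding h_def T_def by simp
  finally have h2: "(\<Oplus>i\<in>{..n}. h i) = (\<Oplus>i\<in>{..n}. B i) \<oplus> T (Suc n) 0" using h1 by simp
  have "(\<Oplus>i\<in>{..Suc n}. T (Suc n) i) = (\<Oplus>i\<in>{..n}. T (Suc n) (Suc i)) \<oplus> T (Suc n) 0"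
    by (rule finsum_Suc2) (use Tc in auto)
  also have "(\<Oplus>i\<in>{..n}. T (Suc n) (Suc i)) = (\<Oplus>i\<in>{..n}. A i \<oplus> B i)"
  proof (rule add.finprod_cong')
    fix i assume "i \<in> {..n}"
    have "T (Suc n) (Suc i) = [((n choose i) + (n choose Suc i))] \<cdot> (a [^] Suc i \<otimes> b [^] (n - i))"
      unfolding T_def by simp
    also have "\<dots> = A i \<oplus> B i" unfolding A_def B_def using a b by (simp add: add.nat_pow_mult)
    finally show "T (Suc n) (Suc i) = A i \<oplus> B i" .
  qed (use Ac Bc in auto)
  also have "(\<Oplus>i\<in>{..n}. A i \<oplus> B i) = (\<Oplus>i\<in>{..n}. A i) \<oplus> (\<Oplus>i\<in>{..n}. B i)"
    using Ac Bc by (simp add: finsum_addf)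
  finally have R: "(\<Oplus>i\<in>{..Suc n}. T (Suc n) i) = (\<Oplus>i\<in>{..n}. A i) \<oplus> (\<Oplus>i\<in>{..n}. B i) \<oplus> T (Suc n) 0" .
  have "(\<Oplus>i\<in>{..Suc n}. T (Suc n) i) = (a \<oplus> b) [^] Suc n"
    unfolding R L h2 using Ac Bc Tc by (simp add: a_assoc)
  then show ?case unfolding T_def by simp
qed

end


context cring begin

lemma char_mult_zero:
  assumes char: "[(p::nat)] \<cdot> \<one> = \<zero>" and x: "x \<in> carrier R"
  shows "[(p * c)] \<cdot> x = \<zero>"
proof -
  have "[p] \<cdot> x = [p] \<cdot> (\<one> \<otimes> x)" using x by simp
  also have "\<dots> = ([p] \<cdot> \<one>) \<otimes> x" using x by (rule add_pow_ldistr[symmetric, OF one_closed])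
  then have px: "[p] \<cdot> x = \<zero>" using char x by simp
  have "[(p * c)] \<cdot> x = [c] \<cdot> ([p] \<cdot> x)" using x by (simp add: add.nat_pow_pow mult.commute)
  then show ?thesis using px by simp
qed

lemma frobenius:
  assumes p: "normalization_semidom_class.prime (p::nat)" and char: "[p] \<cdot> \<one> = \<zero>" and a: "a \<in> carrier R" and b: "b \<in> carrier R"
  shows "(a \<oplus> b) [^] p = a [^] p \<oplus> b [^] p"
proof -
  define T where "T = (\<lambda>i. [(p choose i)] \<cdot> (a [^] i \<otimes> b [^] (p - i)))"
  have Tc: "\<And>i. T i \<in> carrier R" unfolding T_def using a b by simp
  obtain k where k: "p = Suc (Suc k)" using prime_ge_2_nat[OF p] by (metis add_2_eq_Suc' le_Suc_ex add.commute)
  have "(a \<oplus> b) [^] p = (\<Oplus>i\<in>{..p}. T i)" unfolding T_def by (rule binomial_ring[OF a b])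
  also have "\<dots> = T (Suc (Suc k)) \<oplus> (\<Oplus>i\<in>{..Suc k}. T i)" unfolding k
    by (rule finsum_Suc) (use Tc in auto)
  also have "(\<Oplus>i\<in>{..Suc k}. T i) = (\<Oplus>i\<in>{..k}. T (Suc i)) \<oplus> T 0"
    by (rule finsum_Suc2) (use Tc in auto)
  also have "(\<Oplus>i\<in>{..k}. T (Suc i)) = (\<Oplus>i\<in>{..k}. \<zero>)"
  proof (rule add.finprod_cong')
    fix i assume i: "i \<in> {..k}"
    have "p dvd (p choose Suc i)" using i k by (intro dvd_choose_prime[OF _ _ _ p]) auto
    then obtain c where "(p choose Suc i) = p * c" by blast
    then show "T (Suc i) = \<zero>" unfolding T_def using char_mult_zero[OF char] a b by simp
  qed auto
  also have "(\<Oplus>i\<in>{..k}. \<zero>) = \<zero>" by simp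
  also have "T 0 = b [^] p" unfolding T_def using b by simp
  also have "T (Suc (Suc k)) = a [^] p" unfolding T_def k using a by simp
  finally show ?thesis using a b by simp
qed

lemma frobenius_pow:
  assumes p: "normalization_semidom_class.prime (p::nat)" and char: "[p] \<cdot> \<one> = \<zero>" and a: "a \<in> carrier R" and b: "b \<in> carrier R"
  shows "(a \<oplus> b) [^] (p ^ k) = a [^] (p ^ k) \<oplus> b [^] (p ^ k)"
proof (induction k)
  case 0 then show ?case using a b by (simp add: nat_pow_eone)
next
  case (Suc k)
  have "(a \<oplus> b) [^] (p ^ Suc k) = ((a \<oplus> b) [^] (p ^ k)) [^] p"
    using a b by (simp add: nat_pow_pow mult.commute)
  also have "\<dots> = (a [^] (p ^ k) \<oplus> b [^] (p ^ k)) [^] p" using Suc by simp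
  also have "\<dots> = (a [^] (p ^ k)) [^] p \<oplus> (b [^] (p ^ k)) [^] p"
    using a b by (intro frobenius[OF p char]) auto
  also have "\<dots> = a [^] (p ^ Suc k) \<oplus> b [^] (p ^ Suc k)"
    using a b by (simp add: nat_pow_pow mult.commute)
  finally show ?case .
qed

lemma frobenius_pow_minus:
  assumes p: "normalization_semidom_class.prime (p::nat)" and char: "[p] \<cdot> \<one> = \<zero>" and a: "a \<in> carrier R" and b: "b \<in> carrier R"
  shows "(a \<ominus> b) [^] (p ^ k) = a [^] (p ^ k) \<ominus> b [^] (p ^ k)"
proof -
  have "a = (a \<ominus> b) \<oplus> b" using a b by algebra
  then have "a [^] (p ^ k) = (a \<ominus> b) [^] (p ^ k) \<oplus> b [^] (p ^ k)"
    using frobenius_pow[OF p char, of "a \<ominus> b" b k] a b by simp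
  moreover have c: "(a \<ominus> b) [^] (p ^ k) \<in> carrier R" "b [^] (p ^ k) \<in> carrier R" using a b by auto
  moreover have "(a \<ominus> b) [^] (p ^ k) = ((a \<ominus> b) [^] (p ^ k) \<oplus> b [^] (p ^ k)) \<ominus> b [^] (p ^ k)"
    using c by algebra
  ultimately show ?thesis by simp
qed

end


context ring begin

lemma eval_tri:
  assumes "x \<in> carrier R" "b \<in> carrier R" "c \<in> carrier R"
  shows "eval (\<one> # replicate n \<zero> @ [b, c]) x = x [^] (n + 2) \<oplus> (b \<otimes> x \<oplus> c)"
proof -
  have "eval (\<one> # replicate n \<zero> @ [b, c]) x = \<one> \<otimes> x [^] (n + 2) \<oplus> eval (replicate n \<zero> @ [b, c]) x"
    by simp
  also have "eval (replicate n \<zero> @ [b, c]) x = eval [b, c] x"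
    using assms by (intro eval_replicate) auto
  also have "eval [b, c] x = b \<otimes> x \<oplus> c" using assms by simp
  finally show ?thesis using assms by simp
qed

lemma tri_poly:
  assumes "subring K R" "b \<in> K" "c \<in> K" "\<one> \<noteq> \<zero>"
  shows "(\<one> # replicate n \<zero> @ [b, c]) \<in> carrier (K[X])"
proof -
  have "\<one> \<in> K" "\<zero> \<in> K" using assms(1) by (auto intro: subringE)
  then show ?thesis unfolding univ_poly_carrier[symmetric] polynomial_def using assms by auto
qed

end

context algebraic_closure begin

lemma tri_poly_L:
  assumes "b \<in> K" "c \<in> K"
  shows "(\<one> # replicate n \<zero> @ [b, c]) \<in> carrier (K[X])"
    "(\<one> # replicate n \<zero> @ [b, c]) \<in> carrier (poly_ring L)"
proof -
  show 1: "(\<one> # replicate n \<zero> @ [b, c]) \<in> carrier (K[X])"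
    using tri_poly[OF subfieldE(1)[OF subfield_axioms] assms] by simp
  have "K \<subseteq> carrier L" using subfieldE(3)[OF subfield_axioms] .
  then show "(\<one> # replicate n \<zero> @ [b, c]) \<in> carrier (poly_ring L)"
    using 1 unfolding univ_poly_carrier[symmetric] polynomial_def by auto
qed

lemma L_infinite: "infinite (carrier L)"
proof
  assume fin: "finite (carrier L)"
  define N where "N = card (carrier L)"
  have "{\<zero>, \<one>} \<subseteq> carrier L" by auto
  then have "card {\<zero>, \<one>} \<le> N" unfolding N_def using fin card_mono by blast
  then have N2: "N \<ge> 2" by simp
  have xN: "x [^] N = x" if x: "x \<in> carrier L" for x
  proof (cases "x = \<zero>")
    case True then show ?thesis using N2 by (simp add: nat_pow_zero)
  next
    case False
    interpret G: group "Multiplicative_Group.mult_of L" by (rule field_mult_group)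
    have xg: "x \<in> carrier (Multiplicative_Group.mult_of L)" using x False by simp
    have "x [^]\<^bsub>Multiplicative_Group.mult_of L\<^esub> order (Multiplicative_Group.mult_of L) = \<one>\<^bsub>Multiplicative_Group.mult_of L\<^esub>" by (rule G.pow_order_eq_1[OF xg])
    moreover have "order (Multiplicative_Group.mult_of L) = N - 1" using order_mult_of[OF fin] unfolding N_def order_def by simp
    ultimately have "x [^] (N - 1) = \<one>" by (simp add: Multiplicative_Group.nat_pow_mult_of)
    moreover have "x [^] N = x [^] (N - 1) \<otimes> x" using N2 nat_pow_Suc[of x "N - 1"] by simp
    ultimately show ?thesis using x by simp
  qed
  have Kc: "\<ominus> \<one> \<in> K" "\<one> \<in> K" using subfieldE(1)[OF subfield_axioms] by (auto intro: subringE)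
  define g where "g = \<one> # replicate (N - 2) \<zero> @ [\<ominus> \<one>, \<one>]"
  have gK: "g \<in> carrier (K[X])" and gL: "g \<in> carrier (poly_ring L)" unfolding g_def using tri_poly_L[OF Kc] by auto
  have "splitted g" by (rule roots_over_subfield[OF gK])
  then have "size (roots g) = N" unfolding splitted_def g_def using N2 by simp
  then obtain x where "x \<in># roots g" using N2 by (metis multiset_nonemptyE size_empty not_numeral_le_zero)
  then have "is_root g x" using roots_mem_iff_is_root[OF gL] by simp
  then have x: "x \<in> carrier L" "eval g x = \<zero>" unfolding is_root_def by auto
  have "eval g x = x [^] (N - 2 + 2) \<oplus> (\<ominus> \<one> \<otimes> x \<oplus> \<one>)" unfolding g_def by (rule eval_tri) (use x in auto)
  also have "N - 2 + 2 = N" using N2 by simp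
  finally have "eval g x = x \<oplus> (\<ominus> \<one> \<otimes> x \<oplus> \<one>)" using xN[OF x(1)] by simp
  also have "\<dots> = \<one>" using x(1) by algebra
  finally show False using x(2) by simp
qed

end


lemma card_set_mset_eq_size:
  assumes a: "\<And>x. count M x \<le> 1"
  shows "card (set_mset M) = size M"
proof -
  have "size M = sum (count M) (set_mset M)" by (rule size_multiset_overloaded_eq)
  also have "\<dots> = sum (\<lambda>_. 1) (set_mset M)"
  proof (rule sum.cong)
    fix x assume "x \<in># M"
    then have "count M x > 0" by simp
    with a[of x] show "count M x = 1" by linarith
  qed simp
  finally show ?thesis by simp
qed

lemma (in ring) minus_zero_iff:
  assumes "a \<in> carrier R" "b \<in> carrier R"
  shows "a \<ominus> b = \<zero> \<longleftrightarrow> a = b"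
proof
  assume "a \<ominus> b = \<zero>"
  moreover have "a = (a \<ominus> b) \<oplus> b" using assms by algebra
  ultimately show "a = b" using assms by simp
next
  assume "a = b" then show "a \<ominus> b = \<zero>" using assms by algebra
qed

lemma (in cring) alg_aux:
  assumes "y \<in> carrier R" "G \<in> carrier R" "Y \<in> carrier R"
  shows "y \<otimes> (y \<otimes> G \<ominus> (Y \<ominus> \<one>)) = (y \<otimes> y) \<otimes> G \<ominus> (Y \<otimes> y) \<oplus> y"
  using assms by algebra

lemma (in cring) alg_aux2:
  assumes "x \<in> carrier R" "a \<in> carrier R" "Z \<in> carrier R"
  shows "(Z \<ominus> x) \<ominus> (Z \<ominus> a) \<oplus> (x \<ominus> a) = \<zero>"
  using assms by algebra

context algebraic_closure begin

lemma sep_card: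
  assumes p: "normalization_semidom_class.prime (p::nat)" and char: "[p] \<cdot> \<one> = \<zero>" and k: "k \<ge> 1"
  shows "card {x \<in> carrier L. x [^] (p ^ k) = x} = p ^ k"
proof -
  define q where "q = p ^ k"
  have p2: "p \<ge> 2" using prime_ge_2_nat[OF p] .
  have "p ^ 1 \<le> p ^ k" using k p2 by (intro power_increasing) auto
  then have q2: "q \<ge> 2" unfolding q_def using p2 by simp
  interpret UP: domain "poly_ring L" by (rule univ_poly_is_domain[OF carrier_is_subring])
  have Kc: "\<ominus> \<one> \<in> K" "\<zero> \<in> K" using subfieldE(1)[OF subfield_axioms] by (auto intro: subringE)
  define f where "f = \<one> # replicate (q - 2) \<zero> @ [\<ominus> \<one>, \<zero>]"
  have fK: "f \<in> carrier (K[X])" and fL: "f \<in> carrier (poly_ring L)"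
    unfolding f_def using tri_poly_L[OF Kc] by auto
  have evf: "eval f x = x [^] q \<ominus> x" if x: "x \<in> carrier L" for x
  proof -
    have "eval f x = x [^] (q - 2 + 2) \<oplus> (\<ominus> \<one> \<otimes> x \<oplus> \<zero>)" unfolding f_def by (rule eval_tri) (use x in auto)
    also have "q - 2 + 2 = q" using q2 by simp
    finally show ?thesis using x by (simp add: minus_eq l_minus)
  qed
  have fne: "f \<noteq> []" unfolding f_def by simp
  have roots_eq: "{x. is_root f x} = {x \<in> carrier L. x [^] q = x}"
  proof -
    have "eval f x = \<zero> \<longleftrightarrow> x [^] q = x" if "x \<in> carrier L" for x
      using evf[OF that] minus_zero_iff[of "x [^] q" x] that by simp
    then show ?thesis unfolding is_root_def using fne by auto
  qed
  have "splitted f" by (rule roots_over_subfield[OF fK])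
  then have sz: "size (roots f) = q" unfolding splitted_def f_def using q2 by simp
  have mult1: "count (roots f) a \<le> 1" for a
  proof (rule ccontr)
    assume "\<not> ?thesis"
    then have am: "2 \<le> alg_mult f a" using alg_mult_eq_count_roots[OF fL] by simp
    then have ac: "a \<in> carrier L" unfolding alg_mult_def using fne by (auto split: if_splits)
    define lin where "lin = [\<one>, \<ominus> a]"
    have linP: "lin \<in> carrier (poly_ring L)"
      unfolding lin_def univ_poly_carrier[symmetric] polynomial_def using ac by auto
    have "(lin [^]\<^bsub>poly_ring L\<^esub> (2::nat)) pdivides f"
      unfolding lin_def by (rule le_alg_mult_imp_pdivides[OF ac fL am])
    then obtain g where g: "g \<in> carrier (poly_ring L)"
      "f = (lin [^]\<^bsub>poly_ring L\<^esub> (2::nat)) \<otimes>\<^bsub>poly_ring L\<^esub> g"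
      unfolding pdivides_def factor_def by auto
    have evlin: "eval lin x = x \<ominus> a" if "x \<in> carrier L" for x
      unfolding lin_def using that ac by (simp add: minus_eq nat_pow_eone)
    have evf2: "eval f x = (x \<ominus> a) [^] (2::nat) \<otimes> eval g x" if x: "x \<in> carrier L" for x
    proof -
      interpret H: ring_hom_ring "poly_ring L" L "\<lambda>p. eval p x"
        by (rule eval_ring_hom[OF carrier_is_subring x])
      have "eval f x = eval (lin [^]\<^bsub>poly_ring L\<^esub> (2::nat)) x \<otimes> eval g x"
        using g linP by simp
      also have "eval (lin [^]\<^bsub>poly_ring L\<^esub> (2::nat)) x = (eval lin x) [^] (2::nat)"
        using H.hom_nat_pow linP by simp
      finally show ?thesis using evlin x by simp
    qed
    have gc: "eval g x \<in> carrier L" if "x \<in> carrier L" for x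
      using g(1) that eval_in_carrier polynomial_in_carrier[OF carrier_is_subring]
      unfolding univ_poly_carrier[symmetric] by blast
    have aroot: "a [^] q = a"
    proof -
      have aa: "a \<ominus> a = \<zero>" using ac by (simp add: minus_zero_iff)
      have "eval f a = \<zero>" using evf2[OF ac] gc[OF ac] ac unfolding aa by (simp add: nat_pow_zero)
      then show ?thesis using evf[OF ac] minus_zero_iff[of "a [^] q" a] ac by simp
    qed
    define Q where "Q = (lin \<otimes>\<^bsub>poly_ring L\<^esub> g) \<ominus>\<^bsub>poly_ring L\<^esub>
       (lin [^]\<^bsub>poly_ring L\<^esub> (q - 1) \<ominus>\<^bsub>poly_ring L\<^esub> \<one>\<^bsub>poly_ring L\<^esub>)"
    have QP: "Q \<in> carrier (poly_ring L)" unfolding Q_def using linP g by simp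
    have evQ: "eval Q x = (x \<ominus> a) \<otimes> eval g x \<ominus> ((x \<ominus> a) [^] (q - 1) \<ominus> \<one>)"
      if x: "x \<in> carrier L" for x
    proof -
      interpret H: ring_hom_ring "poly_ring L" L "\<lambda>p. eval p x"
        by (rule eval_ring_hom[OF carrier_is_subring x])
      have "eval (lin [^]\<^bsub>poly_ring L\<^esub> (q - 1)) x = (eval lin x) [^] (q - 1)"
        using H.hom_nat_pow linP by simp
      then show ?thesis unfolding Q_def using linP g evlin[OF x] x
        by (simp add: UP.minus_eq minus_eq)
    qed
    have Qa: "eval Q a = \<one>"
    proof -
      have "(a \<ominus> a) = \<zero>" using ac by (simp add: minus_zero_iff)
      moreover have "(\<zero>::'a) [^] (q - 1) = \<zero>" using q2 by (simp add: nat_pow_zero)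
      ultimately show ?thesis using evQ[OF ac] gc[OF ac] by (simp add: minus_eq)
    qed
    have Qx: "eval Q x = \<zero>" if x: "x \<in> carrier L" "x \<noteq> a" for x
    proof -
      define y where "y = x \<ominus> a"
      have yc: "y \<in> carrier L" unfolding y_def using x ac by simp
      have y0: "y \<noteq> \<zero>" unfolding y_def using minus_zero_iff[OF x(1) ac] x(2) by simp
      define G where "G = eval g x"
      have Gc: "G \<in> carrier L" unfolding G_def using gc[OF x(1)] .
      have yq: "y [^] q = y [^] (q - 1) \<otimes> y" using q2 nat_pow_Suc[of y "q - 1"] by simp
      have y2: "y [^] (2::nat) = y \<otimes> y" using yc by (simp add: numeral_2_eq_2 nat_pow_Suc)
      have fx: "y [^] (2::nat) \<otimes> G = x [^] q \<ominus> x" unfolding y_def G_def using evf2[OF x(1)] evf[OF x(1)] by simp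
      have frob: "y [^] q = x [^] q \<ominus> a" unfolding y_def q_def
        using frobenius_pow_minus[OF p char x(1) ac, of k] aroot q_def by simp
      have "y \<otimes> eval Q x = y \<otimes> (y \<otimes> G \<ominus> (y [^] (q - 1) \<ominus> \<one>))" unfolding y_def G_def using evQ[OF x(1)] by simp
      also have "\<dots> = (y \<otimes> y) \<otimes> G \<ominus> (y [^] (q - 1) \<otimes> y) \<oplus> y"
      proof -
        show ?thesis using alg_aux[OF yc Gc nat_pow_closed[OF yc]] .
      qed
      also have "\<dots> = (x [^] q \<ominus> x) \<ominus> (x [^] q \<ominus> a) \<oplus> (x \<ominus> a)"
        using fx frob yq y2 unfolding y_def by simp
      also have "\<dots> = \<zero>" using alg_aux2[OF x(1) ac nat_pow_closed[OF x(1)]] .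
      finally have "y \<otimes> eval Q x = \<zero>" .
      moreover have "eval Q x \<in> carrier L" using QP x(1) eval_in_carrier polynomial_in_carrier[OF carrier_is_subring]
        unfolding univ_poly_carrier[symmetric] by blast
      ultimately show ?thesis using integral[of y "eval Q x"] yc y0 by auto
    qed
    have Qne: "Q \<noteq> []" using Qa by auto
    have "carrier L - {a} \<subseteq> {x. is_root Q x}" using Qx Qne unfolding is_root_def by auto
    then have "finite (carrier L - {a})" using finite_number_of_roots[OF QP] finite_subset by blast
    then have "finite (carrier L)" by simp
    then show False using L_infinite by simp
  qed
  have sm: "set_mset (roots f) = {x. is_root f x}" using roots_mem_iff_is_root[OF fL] by auto
  have "card {x \<in> carrier L. x [^] q = x} = card (set_mset (roots f))"
    unfolding sm roots_eq ..
  also have "\<dots> = size (roots f)" by (rule card_set_mset_eq_size[OF mult1])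
  finally show ?thesis using sz q_def by simp
qed

end


lemma (in algebraic_closure) gf_sub:
  assumes p: "normalization_semidom_class.prime (p::nat)" and char: "[p] \<cdot> \<one> = \<zero>" and k: "k \<ge> 1"
  shows "\<exists>S. S \<subseteq> carrier L \<and> card S = p ^ k \<and> \<zero> \<in> S \<and> \<one> \<in> S \<and>
           (\<forall>x\<in>S. \<forall>y\<in>S. x \<oplus> y \<in> S \<and> x \<otimes> y \<in> S)"
proof -
  define S where "S = {x \<in> carrier L. x [^] (p ^ k) = x}"
  have pk: "p ^ k \<noteq> 0" using prime_gt_0_nat[OF p] by simp
  have "S \<subseteq> carrier L" unfolding S_def by auto
  moreover have "card S = p ^ k" unfolding S_def by (rule sep_card[OF p char k])
  moreover have "\<zero> \<in> S" unfolding S_def using pk by (simp add: nat_pow_zero)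
  moreover have "\<one> \<in> S" unfolding S_def by simp
  moreover have "\<forall>x\<in>S. \<forall>y\<in>S. x \<oplus> y \<in> S \<and> x \<otimes> y \<in> S"
  proof (intro ballI conjI)
    fix x y assume x: "x \<in> S" and y: "y \<in> S"
    have xc: "x \<in> carrier L" "x [^] (p ^ k) = x" using x unfolding S_def by auto
    have yc: "y \<in> carrier L" "y [^] (p ^ k) = y" using y unfolding S_def by auto
    show "x \<oplus> y \<in> S" unfolding S_def using frobenius_pow[OF p char xc(1) yc(1), of k] xc yc by simp
    show "x \<otimes> y \<in> S" unfolding S_def using pow_mult_distrib[OF m_comm[OF xc(1) yc(1)] xc(1) yc(1), of "p ^ k"] xc yc by simp
  qed
  ultimately show ?thesis by blast
qed

lemma (in ring_hom_ring) hom_add_pow: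
  assumes "x \<in> carrier R"
  shows "h ([(n::nat)] \<cdot>\<^bsub>R\<^esub> x) = [n] \<cdot>\<^bsub>S\<^esub> (h x)"
  using assms by (induction n) (simp_all add: R.add.nat_pow_Suc S.add.nat_pow_Suc)

lemma (in residues) res_add_pow_one: "[n] \<cdot> \<one> = int n mod m"
proof (induction n)
  case 0 then show ?case by (simp add: res_zero_eq)
next
  case (Suc n)
  have "[Suc n] \<cdot> \<one> = [n] \<cdot> \<one> \<oplus> \<one>" by (simp add: add.nat_pow_Suc)
  also have "\<dots> = (int n mod m + 1) mod m" using Suc by (simp add: res_add_eq res_one_eq)
  also have "\<dots> = (int n + 1) mod m" by (rule mod_add_left_eq)
  also have "\<dots> = int (Suc n) mod m" by (metis add.commute of_nat_Suc)
  finally show ?case .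
qed

lemma gf_exists:
  assumes p: "normalization_semidom_class.prime (p::nat)" and k: "k \<ge> 1"
  shows "\<exists>(L::((int list \<times> nat) multiset \<Rightarrow> int) ring) S. field L \<and> S \<subseteq> carrier L \<and> card S = p ^ k \<and>
     \<zero>\<^bsub>L\<^esub> \<in> S \<and> \<one>\<^bsub>L\<^esub> \<in> S \<and> (\<forall>x\<in>S. \<forall>y\<in>S. x \<oplus>\<^bsub>L\<^esub> y \<in> S \<and> x \<otimes>\<^bsub>L\<^esub> y \<in> S)"
proof -
  define R where "R = residue_ring (int p)"
  from p interpret RP: residues_prime p R
    by unfold_locales (simp_all add: R_def)
  have fR: "field R" by (rule RP.is_field)
  obtain L :: "((int list \<times> nat) multiset \<Rightarrow> int) ring" where L: "algebraic_closure L (ring.indexed_const R ` carrier R)"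
    and h: "ring.indexed_const R \<in> ring_hom R L"
    by (rule field.exists_closure[OF fR])
  interpret AC: algebraic_closure L "ring.indexed_const R ` carrier R" by (rule L)
  interpret H: ring_hom_ring R L "ring.indexed_const R"
    by (rule ring_hom_ringI2[OF RP.ring_axioms AC.ring_axioms h])
  have "[p] \<cdot>\<^bsub>R\<^esub> \<one>\<^bsub>R\<^esub> = \<zero>\<^bsub>R\<^esub>" using RP.res_add_pow_one[of p] by (simp add: RP.res_zero_eq)
  then have char: "[p] \<cdot>\<^bsub>L\<^esub> \<one>\<^bsub>L\<^esub> = \<zero>\<^bsub>L\<^esub>"
    using H.hom_add_pow[OF RP.one_closed, of p] by simp
  obtain S where "S \<subseteq> carrier L \<and> card S = p ^ k \<and> \<zero>\<^bsub>L\<^esub> \<in> S \<and> \<one>\<^bsub>L\<^esub> \<in> S \<and>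
           (\<forall>x\<in>S. \<forall>y\<in>S. x \<oplus>\<^bsub>L\<^esub> y \<in> S \<and> x \<otimes>\<^bsub>L\<^esub> y \<in> S)"
    using AC.gf_sub[OF p char k] by blast
  then show ?thesis using AC.field_axioms by blast
qed


context field begin

lemma eval_rev_map:
  assumes "c \<in> {..<n} \<rightarrow> carrier R" "x \<in> carrier R"
  shows "eval (map c (rev [0..<n])) x = (\<Oplus>i\<in>{..<n}. c i \<otimes> x [^] i)"
  using assms
proof (induction n)
  case 0 then show ?case by simp
next
  case (Suc n)
  have cn: "c \<in> {..<n} \<rightarrow> carrier R" using Suc.prems by auto
  have "map c (rev [0..<Suc n]) = c n # map c (rev [0..<n])" by simp
  then have "eval (map c (rev [0..<Suc n])) x = c n \<otimes> x [^] n \<oplus> eval (map c (rev [0..<n])) x"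
    by simp
  also have "\<dots> = c n \<otimes> x [^] n \<oplus> (\<Oplus>i\<in>{..<n}. c i \<otimes> x [^] i)" using Suc cn by simp
  also have "\<dots> = (\<Oplus>i\<in>{..<Suc n}. c i \<otimes> x [^] i)"
    unfolding lessThan_Suc using Suc.prems cn by (subst finsum_insert) (auto simp: Pi_def)
  finally show ?case .
qed

lemma root_bound:
  assumes c: "c \<in> {..<n} \<rightarrow> carrier R" and nz: "\<exists>i<n. c i \<noteq> \<zero>"
    and Y: "Y \<subseteq> carrier R" "finite Y"
    and roots: "\<And>x. x \<in> Y \<Longrightarrow> (\<Oplus>i\<in>{..<n}. c i \<otimes> x [^] i) = \<zero>"
  shows "card Y < n"
proof -
  define p where "p = map c (rev [0..<n])"
  have setp: "set p \<subseteq> carrier R" unfolding p_def using c by auto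
  define q where "q = normalize p"
  have qpoly: "q \<in> carrier (poly_ring R)"
    unfolding q_def univ_poly_carrier[symmetric] using normalize_gives_polynomial[OF setp] .
  have qne: "q \<noteq> []"
  proof
    assume "q = []"
    then have "p = replicate (length p) \<zero>" using normalize_trick[of p] unfolding q_def by simp
    then have "set p \<subseteq> {\<zero>}" by (metis in_set_replicate subsetI singletonI)
    moreover obtain i where "i < n" "c i \<noteq> \<zero>" using nz by blast
    moreover have "c i \<in> set p" unfolding p_def using \<open>i < n\<close> by auto
    ultimately show False by auto
  qed
  have evq: "eval q x = (\<Oplus>i\<in>{..<n}. c i \<otimes> x [^] i)" if "x \<in> carrier R" for x
    unfolding q_def using eval_normalize[OF setp that] eval_rev_map[OF c that] p_def by simp
  have "Y \<subseteq> {x. is_root q x}" using Y roots evq qne unfolding is_root_def by auto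
  then have "card Y \<le> card {x. is_root q x}"
    using finite_number_of_roots[OF qpoly] by (simp add: card_mono)
  also have "{x. is_root q x} = set_mset (roots q)" using roots_mem_iff_is_root[OF qpoly] by auto
  also have "card (set_mset (roots q)) \<le> size (roots q)" by (metis mset_set_set_mset_msubset size_mset_mono size_mset_set)
  also have "\<dots> \<le> degree q" by (rule size_roots_le_degree[OF qpoly])
  also have "\<dots> < n"
  proof -
    have "length q \<le> length p" unfolding q_def by (rule normalize_length_le)
    then show ?thesis using qne unfolding p_def by (cases q) auto
  qed
  finally show ?thesis .
qed

end


context field begin

lemma minus_eq0:
  assumes "a \<in> carrier R" "b \<in> carrier R" "a \<ominus> b = \<zero>"
  shows "a = b"
proof -
  have "a = (a \<ominus> b) \<oplus> b" using assms(1,2) by algebra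
  then show ?thesis using assms by simp
qed

lemma finsum_diff:
  assumes "finite A" "f \<in> A \<rightarrow> carrier R" "g \<in> A \<rightarrow> carrier R"
  shows "(\<Oplus>i\<in>A. f i \<ominus> g i) = (\<Oplus>i\<in>A. f i) \<ominus> (\<Oplus>i\<in>A. g i)"
  using assms
proof (induction A rule: finite_induct)
  case empty then show ?case by (simp add: minus_eq)
next
  case (insert a F)
  have fa: "f a \<in> carrier R" "g a \<in> carrier R" using insert.prems by auto
  have fF: "f \<in> F \<rightarrow> carrier R" "g \<in> F \<rightarrow> carrier R" using insert.prems by auto
  have s1: "(\<Oplus>i\<in>F. f i) \<in> carrier R" "(\<Oplus>i\<in>F. g i) \<in> carrier R" using fF by auto
  have "(\<Oplus>i\<in>insert a F. f i \<ominus> g i) = (f a \<ominus> g a) \<oplus> (\<Oplus>i\<in>F. f i \<ominus> g i)"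
    using insert fa fF by (subst finsum_insert) (auto simp: Pi_def)
  also have "\<dots> = (f a \<ominus> g a) \<oplus> ((\<Oplus>i\<in>F. f i) \<ominus> (\<Oplus>i\<in>F. g i))" using insert fF by simp
  also have "\<dots> = (f a \<oplus> (\<Oplus>i\<in>F. f i)) \<ominus> (g a \<oplus> (\<Oplus>i\<in>F. g i))"
    using fa s1 by algebra
  also have "\<dots> = (\<Oplus>i\<in>insert a F. f i) \<ominus> (\<Oplus>i\<in>insert a F. g i)"
    using finsum_insert[OF insert(1,2) fF(1) fa(1)] finsum_insert[OF insert(1,2) fF(2) fa(2)] by simp
  finally show ?case .
qed

lemma sub_pow_closed:
  assumes "\<zero> \<in> S" "\<one> \<in> S" "\<forall>x\<in>S. \<forall>y\<in>S. x \<oplus> y \<in> S \<and> x \<otimes> y \<in> S" "x \<in> S"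
  shows "x [^] (n::nat) \<in> S"
proof (induction n)
  case 0 then show ?case using assms(2) by simp
next
  case (Suc n) then show ?case using assms(3,4) by (simp add: nat_pow_Suc)
qed

lemma sub_finsum_closed:
  assumes S: "S \<subseteq> carrier R" "\<zero> \<in> S" "\<one> \<in> S" "\<forall>x\<in>S. \<forall>y\<in>S. x \<oplus> y \<in> S \<and> x \<otimes> y \<in> S"
  and f: "f \<in> {..<(n::nat)} \<rightarrow> S"
  shows "(\<Oplus>i\<in>{..<n}. f i) \<in> S"
  using f
proof (induction n)
  case 0 then show ?case using S by simp
next
  case (Suc n)
  have fn: "f \<in> {..<n} \<rightarrow> S" "f n \<in> S" using Suc.prems by auto
  have "(\<Oplus>i\<in>{..<Suc n}. f i) = f n \<oplus> (\<Oplus>i\<in>{..<n}. f i)"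
    unfolding lessThan_Suc using fn S by (subst finsum_insert) (auto simp: Pi_def)
  then show ?case using Suc.IH[OF fn(1)] fn(2) S by simp
qed

definition ev :: "(nat \<Rightarrow> 'a) \<Rightarrow> nat \<Rightarrow> 'a \<Rightarrow> 'a" where
  "ev u t x = (\<Oplus>i\<in>{..<t}. u i \<otimes> x [^] i)"

lemma ev_diff_root:
  assumes "u \<in> {..<t} \<rightarrow> carrier R" "v \<in> {..<t} \<rightarrow> carrier R" "x \<in> carrier R"
    "ev u t x = ev v t x"
  shows "(\<Oplus>i\<in>{..<t}. (u i \<ominus> v i) \<otimes> x [^] i) = \<zero>"
proof -
  have "(\<Oplus>i\<in>{..<t}. (u i \<ominus> v i) \<otimes> x [^] i) = (\<Oplus>i\<in>{..<t}. u i \<otimes> x [^] i \<ominus> v i \<otimes> x [^] i)"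
    using assms by (intro add.finprod_cong') (auto simp: Pi_def minus_eq l_distr l_minus)
  also have "\<dots> = ev u t x \<ominus> ev v t x"
    unfolding ev_def using assms by (subst finsum_diff) (auto simp: Pi_def)
  also have "\<dots> = \<zero>" using assms unfolding ev_def by (simp add: Pi_def)
  finally show ?thesis .
qed

lemma drop_last_term:
  assumes "c \<in> {..<Suc n} \<rightarrow> carrier R" "c n = \<zero>" "x \<in> carrier R"
  shows "(\<Oplus>i\<in>{..<Suc n}. c i \<otimes> x [^] i) = (\<Oplus>i\<in>{..<n}. c i \<otimes> x [^] i)"
proof -
  have "(\<Oplus>i\<in>{..<Suc n}. c i \<otimes> x [^] i) = c n \<otimes> x [^] n \<oplus> (\<Oplus>i\<in>{..<n}. c i \<otimes> x [^] i)"
    unfolding lessThan_Suc using assms by (subst finsum_insert) (auto simp: Pi_def)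
  then show ?thesis using assms by (simp add: Pi_def)
qed

end


lemma (in field) mds_from_sub:
  assumes S: "S \<subseteq> carrier R" "card S = m" "\<zero> \<in> S" "\<one> \<in> S" "\<forall>x\<in>S. \<forall>y\<in>S. x \<oplus> y \<in> S \<and> x \<otimes> y \<in> S"
    and tl: "1 \<le> t" "t \<le> l" "l \<le> m + 1" and m0: "m > 0"
  shows "\<exists>U. U \<subseteq> words l {0..<m} \<and> card U = m^t \<and>
     (\<forall>u\<in>U. \<forall>v\<in>U. u \<noteq> v \<longrightarrow> card {i\<in>{0..<l}. u i = v i} \<le> t - 1)"
proof -
  have finS: "finite S" using S(2) m0 card_ge_0_finite by blast
  obtain \<sigma> where sig: "bij_betw \<sigma> {0..<m} S" using ex_bij_betw_nat_finite[OF finS] S(2) by auto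
  define \<beta> where "\<beta> = inv_into {0..<m} \<sigma>"
  have bet: "bij_betw \<beta> S {0..<m}" unfolding \<beta>_def by (rule bij_betw_inv_into[OF sig])
  have sigS: "\<And>i. i < m \<Longrightarrow> \<sigma> i \<in> S" using sig by (auto dest: bij_betwE)
  have sig_inj: "inj_on \<sigma> {0..<m}" using sig by (rule bij_betw_imp_inj_on)
  have bet_inj: "inj_on \<beta> S" using bet by (rule bij_betw_imp_inj_on)
  define V where "V = PiE {0..<t} (\<lambda>_. S)"
  define val where "val = (\<lambda>u i. if i < m then ev u t (\<sigma> i) else u (t - 1))"
  define word where "word = (\<lambda>u. \<lambda>i\<in>{0..<l}. \<beta> (val u i))"
  have VS: "\<And>u i. u \<in> V \<Longrightarrow> i < t \<Longrightarrow> u i \<in> S" unfolding V_def by auto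
  have Vc: "\<And>u. u \<in> V \<Longrightarrow> u \<in> {..<t} \<rightarrow> carrier R" using VS S(1) by auto
  have valS: "val u i \<in> S" if "u \<in> V" for u i
  proof (cases "i < m")
    case True
    have "(\<lambda>j. u j \<otimes> \<sigma> i [^] j) \<in> {..<t} \<rightarrow> S"
      using VS[OF that] sub_pow_closed[OF S(3,4,5) sigS[OF True]] S(5) by auto
    then show ?thesis using True sub_finsum_closed[OF S(1,3,4,5)] unfolding val_def ev_def by auto
  next
    case False then show ?thesis using VS[OF that, of "t - 1"] tl unfolding val_def by auto
  qed
  have agree: "card {i\<in>{0..<l}. word u i = word v i} \<le> t - 1" if uv: "u \<in> V" "v \<in> V" "u \<noteq> v" for u v
  proof -
    have eqv: "{i\<in>{0..<l}. word u i = word v i} = {i\<in>{0..<l}. val u i = val v i}"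
      unfolding word_def using bet_inj valS[OF uv(1)] valS[OF uv(2)] by (auto dest: inj_onD)
    define Pts where "Pts = {i\<in>{0..<l}. i < m \<and> ev u t (\<sigma> i) = ev v t (\<sigma> i)}"
    define Inf where "Inf = {i\<in>{0..<l}. \<not> i < m \<and> u (t - 1) = v (t - 1)}"
    have split: "{i\<in>{0..<l}. val u i = val v i} = Pts \<union> Inf" unfolding Pts_def Inf_def val_def by auto
    define d where "d = (\<lambda>i. u i \<ominus> v i)"
    have dc: "d \<in> {..<t} \<rightarrow> carrier R" unfolding d_def using Vc[OF uv(1)] Vc[OF uv(2)] by auto
    have sigc: "\<sigma> i \<in> carrier R" if "i < m" for i using sigS[OF that] S(1) by auto
    have rootP: "(\<Oplus>j\<in>{..<t}. d j \<otimes> (\<sigma> i) [^] j) = \<zero>" if "i \<in> Pts" for i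
      unfolding d_def using that unfolding Pts_def
      using ev_diff_root[OF Vc[OF uv(1)] Vc[OF uv(2)] sigc] by auto
    have finPts: "finite Pts" unfolding Pts_def by auto
    have PtsS: "Pts \<subseteq> {0..<m}" unfolding Pts_def by auto
    have cardPts: "card (\<sigma> ` Pts) = card Pts"
      by (rule card_image[OF inj_on_subset[OF sig_inj PtsS]])
    have sPc: "\<sigma> ` Pts \<subseteq> carrier R" using sigc unfolding Pts_def by auto
    have InfS: "Inf \<subseteq> {m}" unfolding Inf_def using tl by auto
    obtain k where k: "k < t" "u k \<noteq> v k"
      using uv unfolding V_def by (metis PiE_ext atLeastLessThan_iff zero_le)
    have dk: "d k \<noteq> \<zero>" unfolding d_def using k Vc[OF uv(1)] Vc[OF uv(2)] minus_eq0 by (auto simp: Pi_def)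
    show ?thesis
    proof (cases "u (t - 1) = v (t - 1)")
      case False
      then have "Inf = {}" unfolding Inf_def by auto
      moreover have "card (\<sigma> ` Pts) < t"
        by (rule root_bound[OF dc]) (use k dk sPc finPts rootP in auto)
      ultimately show ?thesis using eqv split cardPts by simp
    next
      case True
      have vc: "v (t - 1) \<in> carrier R" using Vc[OF uv(2)] tl by auto
      have dl: "d (t - 1) = \<zero>" unfolding d_def using True vc by (simp add: minus_eq r_neg)
      have kt: "k < t - 1" using k dl dk by (metis less_SucE Suc_pred' tl(1) less_le_trans zero_less_one)
      have tt: "Suc (t - 1) = t" using tl by simp
      have dc': "d \<in> {..<t - 1} \<rightarrow> carrier R" using dc by auto
      have "card (\<sigma> ` Pts) < t - 1"
      proof (rule root_bound[OF dc'])
        show "\<exists>i<t - 1. d i \<noteq> \<zero>" using kt dk by auto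
        show "\<sigma> ` Pts \<subseteq> carrier R" "finite (\<sigma> ` Pts)" using sPc finPts by auto
        fix x assume "x \<in> \<sigma> ` Pts"
        then obtain i where i: "i \<in> Pts" "x = \<sigma> i" by auto
        have xc: "x \<in> carrier R" using i sPc by auto
        have "(\<Oplus>j\<in>{..<Suc (t - 1)}. d j \<otimes> x [^] j) = \<zero>" using rootP[OF i(1)] i(2) tt by simp
        moreover have dc2: "d \<in> {..<Suc (t - 1)} \<rightarrow> carrier R" using dc tt by simp
        moreover have "(\<Oplus>j\<in>{..<Suc (t - 1)}. d j \<otimes> x [^] j) = (\<Oplus>j\<in>{..<t - 1}. d j \<otimes> x [^] j)"
          by (rule drop_last_term[OF dc2 dl xc])
        ultimately show "(\<Oplus>j\<in>{..<t - 1}. d j \<otimes> x [^] j) = \<zero>" by simp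
      qed
      moreover have "card Inf \<le> 1" using card_mono[OF _ InfS] by simp
      moreover have "card (Pts \<union> Inf) \<le> card Pts + card Inf" by (rule card_Un_le)
      ultimately show ?thesis using eqv split cardPts by simp
    qed
  qed
  have inj: "inj_on word V"
  proof (rule inj_onI, rule ccontr)
    fix u v assume a: "u \<in> V" "v \<in> V" "word u = word v" "u \<noteq> v"
    have "{i\<in>{0..<l}. word u i = word v i} = {0..<l}" using a(3) by auto
    then show False using agree[OF a(1,2,4)] tl by simp
  qed
  define U where "U = word ` V"
  have "U \<subseteq> words l {0..<m}"
    unfolding U_def words_def word_def using valS bet by (auto simp: PiE_iff dest: bij_betwE)
  moreover have "card U = m^t"
  proof -
    have "card U = card V" unfolding U_def by (rule card_image[OF inj])
    also have "\<dots> = m^t" unfolding V_def using S(2) finS by (simp add: card_PiE)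
    finally show ?thesis .
  qed
  moreover have "\<forall>u\<in>U. \<forall>v\<in>U. u \<noteq> v \<longrightarrow> card {i\<in>{0..<l}. u i = v i} \<le> t - 1"
    unfolding U_def using agree by auto
  ultimately show ?thesis by blast
qed


lemma mds_exists:
  assumes "prime_power m" "1 \<le> t" "t \<le> l" "l \<le> m + 1"
  shows "\<exists>U. U \<subseteq> words l {0..<m} \<and> card U = m^t \<and>
     (\<forall>u\<in>U. \<forall>v\<in>U. u \<noteq> v \<longrightarrow> card {i\<in>{0..<l}. u i = v i} \<le> t - 1)"
proof -
  obtain p k where p: "normalization_semidom_class.prime p" and k: "k \<ge> 1" and m: "m = p ^ k"
    using assms(1) unfolding prime_power_def by blast
  obtain L :: "((int list \<times> nat) multiset \<Rightarrow> int) ring" and S where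
    L: "field L" "S \<subseteq> carrier L" "card S = p ^ k" "\<zero>\<^bsub>L\<^esub> \<in> S" "\<one>\<^bsub>L\<^esub> \<in> S"
       "\<forall>x\<in>S. \<forall>y\<in>S. x \<oplus>\<^bsub>L\<^esub> y \<in> S \<and> x \<otimes>\<^bsub>L\<^esub> y \<in> S"
    using gf_exists[OF p k] by blast
  have m0: "m > 0" using m prime_gt_0_nat[OF p] by simp
  show ?thesis
    using field.mds_from_sub[OF L(1) L(2) L(3)[folded m] L(4) L(5) L(6) assms(2,3,4) m0] .
qed

lemma OA_agree:
  assumes oa: "is_OA t l s S A" and j: "j < s^t" and k: "k < s^t" and jk: "j \<noteq> k"
  shows "card {i\<in>{0..<l}. A i j = A i k} \<le> t - 1"
proof (rule ccontr)
  assume "\<not> ?thesis"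
  then have "t \<le> card {i\<in>{0..<l}. A i j = A i k}" by simp
  then obtain T where T: "T \<subseteq> {i\<in>{0..<l}. A i j = A i k}" "card T = t"
    by (meson obtain_subset_with_card_n)
  have Tl: "T \<subseteq> {0..<l}" using T(1) by auto
  have "bij_betw (\<lambda>j. restrict (\<lambda>i. A i j) T) {0..<s ^ t} (PiE T (\<lambda>_. S))"
    using oa Tl T(2) unfolding is_OA_def by blast
  then have inj: "inj_on (\<lambda>j. restrict (\<lambda>i. A i j) T) {0..<s ^ t}" by (rule bij_betw_imp_inj_on)
  have "restrict (\<lambda>i. A i j) T = restrict (\<lambda>i. A i k) T"
    by (rule restrict_ext) (use T(1) in auto)
  with inj j k have "j = k" by (auto dest: inj_onD)
  with jk show False by simp
qed

lemma enc_inj: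
  fixes a b a' b' m :: nat
  assumes "b < m" "b' < m" "a * m + b = a' * m + b'"
  shows "a = a' \<and> b = b'"
proof -
  have "b = (a * m + b) mod m" using assms(1) by simp
  also have "\<dots> = (a' * m + b') mod m" using assms(3) by simp
  also have "\<dots> = b'" using assms(2) by simp
  finally have bb: "b = b'" .
  then have "a * m = a' * m" using assms by simp
  moreover have "m > 0" using assms by simp
  ultimately show ?thesis using bb by simp
qed

lemma arith_aux: "(n::nat) \<le> K \<Longrightarrow> n + z = l \<Longrightarrow> z \<le> a \<Longrightarrow> a < r \<Longrightarrow> l = K + r \<Longrightarrow> False"
  by linarith

theorem lemma7:
  fixes m l s t :: nat
  assumes "prime_power m"
    and "l > 0" and "s > 0" and "t > 0"
    and "m \<ge> l - 1"
    and "2 * t - 1 \<le> l"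
    and "OA_exists t l s"
  shows "\<forall>c::nat. c \<ge> t \<and> (\<exists>r. t \<le> r \<and> r \<le> c \<and> l = c * (t - 1) + r) \<longrightarrow>
           (\<exists>(F :: nat set) C. finite F \<and> card F = (s - 1) * m + 1 \<and> frameproof c l F C \<and>
              real (card C) = (real s ^ t - 1) / (real s - 1) ^ t * (real ((s - 1) * m + 1) - 1) ^ t)"
proof (intro allI impI)
  fix c :: nat
  assume "c \<ge> t \<and> (\<exists>r. t \<le> r \<and> r \<le> c \<and> l = c * (t - 1) + r)"
  then obtain r where ct: "c \<ge> t" and r: "t \<le> r" "r \<le> c" "l = c * (t - 1) + r" by blast
  obtain S :: "nat set" and A where oa: "is_OA t l s S A"
    using assms(7) unfolding OA_exists_def by blast
  have s2: "s \<ge> 2" and finS: "finite S" and cardS: "card S = s"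
    and AS: "\<And>i j. i < l \<Longrightarrow> j < s^t \<Longrightarrow> A i j \<in> S"
    using oa unfolding is_OA_def by auto
  have st0: "0 < s^t" using s2 by simp
  obtain U where U: "U \<subseteq> words l {0..<m}" "card U = m^t"
    and Uagr: "\<And>u v. u \<in> U \<Longrightarrow> v \<in> U \<Longrightarrow> u \<noteq> v \<Longrightarrow> card {i\<in>{0..<l}. u i = v i} \<le> t - 1"
  proof -
    have "t \<le> l" "l \<le> m + 1" using assms by auto
    then show ?thesis using that mds_exists[OF assms(1), of t l] assms by auto
  qed
  have Uval: "\<And>u i. u \<in> U \<Longrightarrow> i < l \<Longrightarrow> u i < m"
    using U(1) unfolding words_def by (auto simp: PiE_iff)
  have "\<forall>i. \<exists>\<phi>. i < l \<longrightarrow> bij_betw \<phi> (S - {A i 0}) {0..<s-1}"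
  proof
    fix i
    show "\<exists>\<phi>. i < l \<longrightarrow> bij_betw \<phi> (S - {A i 0}) {0..<s-1}"
    proof (cases "i < l")
      case True
      have "card (S - {A i 0}) = s - 1" using AS[OF True st0] finS cardS by simp
      then show ?thesis using ex_bij_betw_finite_nat[of "S - {A i 0}"] finS by auto
    qed auto
  qed
  then obtain \<phi> where phi: "\<And>i. i < l \<Longrightarrow> bij_betw (\<phi> i) (S - {A i 0}) {0..<s-1}"
    by metis
  define w where "w = (\<lambda>j u. (\<lambda>i\<in>{0..<l}. if A i j = A i 0 then 0 else 1 + \<phi> i (A i j) * m + u i))"
  define J where "J = {1..<s^t}"
  define C where "C = (\<lambda>(j,u). w j u) ` (J \<times> U)"
  define F where "F = {0..<(s-1)*m+1}"
  have sym_eq: "A i j = A i k \<and> (A i j \<noteq> A i 0 \<longrightarrow> u i = v i)"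
    if "i < l" "j \<in> J" "k \<in> J" "u \<in> U" "v \<in> U" "w j u i = w k v i" for i j k u v
  proof -
    have jk: "j < s^t" "k < s^t" using that J_def by auto
    have inj: "inj_on (\<phi> i) (S - {A i 0})" using phi[OF \<open>i<l\<close>] bij_betw_imp_inj_on by blast
    show ?thesis
    proof (cases "A i j = A i 0")
      case True
      then show ?thesis using that unfolding w_def by (auto split: if_splits)
    next
      case False
      then have nk: "A i k \<noteq> A i 0" using that unfolding w_def by (auto split: if_splits)
      have eq: "\<phi> i (A i j) * m + u i = \<phi> i (A i k) * m + v i"
        using that False nk unfolding w_def by auto
      have "\<phi> i (A i j) = \<phi> i (A i k) \<and> u i = v i"
        using enc_inj[OF Uval[OF that(4,1)] Uval[OF that(5,1)] eq] .
      moreover have "A i j \<in> S - {A i 0}" "A i k \<in> S - {A i 0}"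
        using AS[OF that(1)] jk False nk by auto
      ultimately show ?thesis using inj by (auto dest: inj_onD)
    qed
  qed
  have Zb: "card {i\<in>{0..<l}. A i j = A i 0} \<le> t - 1" if "j \<in> J" for j
    using OA_agree[OF oa, of j 0] that st0 J_def by auto
  have Nb: "card {i\<in>{0..<l}. A i j \<noteq> A i 0 \<and> w j u i = w k v i} \<le> t - 1"
    if "j \<in> J" "k \<in> J" "u \<in> U" "v \<in> U" "(j,u) \<noteq> (k,v)" for j k u v
  proof (cases "j = k")
    case True
    then have "u \<noteq> v" using that by simp
    have "{i\<in>{0..<l}. A i j \<noteq> A i 0 \<and> w j u i = w k v i} \<subseteq> {i\<in>{0..<l}. u i = v i}"
    proof (intro subsetI)
      fix i assume "i \<in> {i\<in>{0..<l}. A i j \<noteq> A i 0 \<and> w j u i = w k v i}"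
      then have i: "i < l" "A i j \<noteq> A i 0" "w j u i = w k v i" by auto
      show "i \<in> {i\<in>{0..<l}. u i = v i}" using sym_eq[OF i(1) that(1-4) i(3)] i(1,2) by simp
    qed
    then have "card {i\<in>{0..<l}. A i j \<noteq> A i 0 \<and> w j u i = w k v i} \<le> card {i\<in>{0..<l}. u i = v i}"
      by (intro card_mono) auto
    then show ?thesis using Uagr[OF that(3,4) \<open>u\<noteq>v\<close>] by linarith
  next
    case False
    have "{i\<in>{0..<l}. A i j \<noteq> A i 0 \<and> w j u i = w k v i} \<subseteq> {i\<in>{0..<l}. A i j = A i k}"
    proof (intro subsetI)
      fix i assume "i \<in> {i\<in>{0..<l}. A i j \<noteq> A i 0 \<and> w j u i = w k v i}"
      then have i: "i < l" "A i j \<noteq> A i 0" "w j u i = w k v i" by auto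
      show "i \<in> {i\<in>{0..<l}. A i j = A i k}" using sym_eq[OF i(1) that(1-4) i(3)] i(1) by simp
    qed
    then have "card {i\<in>{0..<l}. A i j \<noteq> A i 0 \<and> w j u i = w k v i} \<le> card {i\<in>{0..<l}. A i j = A i k}"
      by (intro card_mono) auto
    moreover have "card {i\<in>{0..<l}. A i j = A i k} \<le> t - 1"
      using OA_agree[OF oa, of j k] that False J_def by auto
    ultimately show ?thesis by linarith
  qed
  have split_l: "{0..<l} = {i\<in>{0..<l}. A i j = A i 0} \<union> {i\<in>{0..<l}. A i j \<noteq> A i 0}" for j
    by auto
  have cardsplit: "l = card {i\<in>{0..<l}. A i j = A i 0} + card {i\<in>{0..<l}. A i j \<noteq> A i 0}" for j
  proof -
    have "card {0..<l} = card {i\<in>{0..<l}. A i j = A i 0} + card {i\<in>{0..<l}. A i j \<noteq> A i 0}"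
      by (subst split_l[of j], rule card_Un_disjoint) auto
    then show ?thesis by simp
  qed
  have inj: "inj_on (\<lambda>(j,u). w j u) (J \<times> U)"
  proof (rule inj_onI, clarify)
    fix j u k v assume a: "j \<in> J" "u \<in> U" "k \<in> J" "v \<in> U" "w j u = w k v"
    show "j = k \<and> u = v"
    proof (rule ccontr)
      assume ne: "\<not> (j = k \<and> u = v)"
      have "{i\<in>{0..<l}. A i j \<noteq> A i 0} = {i\<in>{0..<l}. A i j \<noteq> A i 0 \<and> w j u i = w k v i}"
        using a(5) by auto
      then have "card {i\<in>{0..<l}. A i j \<noteq> A i 0} \<le> t - 1" using Nb[of j k u v] a ne by auto
      moreover have "card {i\<in>{0..<l}. A i j = A i 0} \<le> t - 1" using Zb a by auto
      ultimately have "l \<le> 2 * (t - 1)" using cardsplit[of j] by linarith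
      then show False using assms(6) assms(4) by linarith
    qed
  qed
  have Cw: "C \<subseteq> words l F"
  proof
    fix x assume "x \<in> C"
    then obtain j u where ju: "j \<in> J" "u \<in> U" "x = w j u" unfolding C_def by auto
    have "w j u i \<in> F" if "i < l" for i
    proof (cases "A i j = A i 0")
      case True then show ?thesis using that unfolding w_def F_def by auto
    next
      case False
      have "A i j \<in> S - {A i 0}" using AS[OF that] ju(1) False J_def by auto
      then have "\<phi> i (A i j) < s - 1" using phi[OF that] by (auto dest: bij_betwE)
      then have "\<phi> i (A i j) \<le> s - 2" by linarith
      then have "\<phi> i (A i j) * m \<le> (s - 2) * m" by simp
      moreover have "u i < m" using Uval[OF ju(2) that] .
      moreover have "(s - 2) * m + m = (s - 1) * m"
      proof -
        have "s - 1 = (s - 2) + 1" using s2 by simp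
        then show ?thesis by (simp add: distrib_right)
      qed
      ultimately have "1 + \<phi> i (A i j) * m + u i < (s-1)*m + 1" by linarith
      then show ?thesis using that False unfolding w_def F_def by auto
    qed
    then show "x \<in> words l F" unfolding words_def ju(3) w_def by (auto simp: PiE_iff)
  qed
  have m0: "m > 0" using assms(1) unfolding prime_power_def
    by (metis gr0I power_eq_0_iff prime_gt_0_nat)
  have finU: "finite U"
  proof (rule ccontr)
    assume "infinite U" then have "card U = 0" by simp
    then show False using U(2) m0 by simp
  qed
  have finC: "finite C" unfolding C_def J_def using finU by simp
  have fp: "frameproof c l F C"
    unfolding frameproof_def
  proof (intro conjI allI impI)
    show "C \<subseteq> words l F" by (rule Cw)
    fix P assume P: "P \<subseteq> C \<and> card P \<le> c"
    have finP: "finite P" using P finC finite_subset by blast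
    show "desc l F P \<inter> C = P"
    proof
      show "P \<subseteq> desc l F P \<inter> C" using P Cw unfolding desc_def by blast
    next
      show "desc l F P \<inter> C \<subseteq> P"
      proof
        fix x assume x: "x \<in> desc l F P \<inter> C"
        show "x \<in> P"
        proof (rule ccontr)
          assume xP: "x \<notin> P"
          obtain j u where ju: "j \<in> J" "u \<in> U" "x = w j u" using x unfolding C_def by auto
          define N where "N = {i\<in>{0..<l}. A i j \<noteq> A i 0}"
          have cov: "N \<subseteq> (\<Union>y\<in>P. {i\<in>N. x i = y i})"
            using x unfolding desc_def N_def by auto
          have each: "card {i\<in>N. x i = y i} \<le> t - 1" if yP: "y \<in> P" for y
          proof -
            obtain k v where kv: "k \<in> J" "v \<in> U" "y = w k v" using yP P unfolding C_def by auto
            have "(j,u) \<noteq> (k,v)" using xP yP ju kv by auto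
            moreover have "{i\<in>N. x i = y i} = {i\<in>{0..<l}. A i j \<noteq> A i 0 \<and> w j u i = w k v i}"
              unfolding N_def ju kv by auto
            ultimately show ?thesis using Nb ju kv by auto
          qed
          have finN: "finite (\<Union>y\<in>P. {i\<in>N. x i = y i})" using finP unfolding N_def by auto
          have "card N \<le> card (\<Union>y\<in>P. {i\<in>N. x i = y i})" by (rule card_mono[OF finN cov])
          also have "\<dots> \<le> (\<Sum>y\<in>P. card {i\<in>N. x i = y i})" by (rule card_UN_le[OF finP])
          also have "\<dots> \<le> card P * (t - 1)" using sum_bounded_above[of P "\<lambda>y. card {i\<in>N. x i = y i}" "t-1"] each by simp
          also have "\<dots> \<le> c * (t - 1)" using P by simp
          finally have "card N \<le> c * (t - 1)" .
          moreover have "card N + card {i\<in>{0..<l}. A i j = A i 0} = l"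
            using cardsplit[of j] N_def by simp
          moreover have "card {i\<in>{0..<l}. A i j = A i 0} \<le> t - 1" using Zb ju by auto
          moreover have "t - 1 < r" using r(1) assms(4) by linarith
          ultimately show False using r(3) arith_aux by metis
        qed
      qed
    qed
  qed
  have cardC: "card C = (s^t - 1) * m^t"
    unfolding C_def using card_image[OF inj] U(2) J_def by (simp add: card_cartesian_product)
  have "real (card C) = (real s ^ t - 1) / (real s - 1) ^ t * (real ((s - 1) * m + 1) - 1) ^ t"
  proof -
    have s1: "real s - 1 \<noteq> 0" using s2 by simp
    have e1: "real ((s - 1) * m + 1) - 1 = (real s - 1) * real m" using s2 by (simp add: of_nat_diff)
    have "(real s ^ t - 1) / (real s - 1) ^ t * (real ((s - 1) * m + 1) - 1) ^ t
        = (real s ^ t - 1) / (real s - 1) ^ t * ((real s - 1) ^ t * real m ^ t)"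
      unfolding e1 by (simp add: power_mult_distrib)
    also have "\<dots> = (real s ^ t - 1) * real m ^ t" using s1 by simp
    finally have "(real s ^ t - 1) / (real s - 1) ^ t * (real ((s - 1) * m + 1) - 1) ^ t
        = (real s ^ t - 1) * real m ^ t" .
    moreover have "real (card C) = (real s ^ t - 1) * real m ^ t"
    proof -
      have one: "1 \<le> s^t" using st0 by linarith
      have "real (s^t - 1) = real s ^ t - 1" using of_nat_diff[OF one] by simp
      then show ?thesis using cardC by simp
    qed
    ultimately show ?thesis by simp
  qed
  then show "\<exists>(F :: nat set) C. finite F \<and> card F = (s - 1) * m + 1 \<and> frameproof c l F C \<and>
              real (card C) = (real s ^ t - 1) / (real s - 1) ^ t * (real ((s - 1) * m + 1) - 1) ^ t"
    using fp unfolding F_def by (intro exI[of _ "{0..<(s-1)*m+1}"] exI[of _ C]) auto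
qed


end
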